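(* Let $\alpha,\gamma$ be weak compositions. The following are equivalent: (1) $\mathsf{rajcode}(\alpha)=\mathsf{rajcode}(\gamma)$; (2) $\mathsf{dark}(\alpha)=\mathsf{dark}(\gamma)$; (3) the underlying diagrams (ignoring labels) of $\mathsf{snow}(D(\alpha))$ and $\mathsf{snow}(D(\gamma))$ are equal.
   Context: A weak composition is an infinite sequence of nonnegative integers with finitely many positive entries; $D(\alpha)=\{(r,c):1\le c\le\alpha_r\}$ where $(r,c)$ is the cell in row $r$ (row 1 on top), column $c$. For a diagram $D$ (finite subset of $\mathbb{Z}_{>0}^2$), $\mathsf{snow}(D)$ is built by iterating through rows from bottom to top: in row $r$, take the rightmost cell $(r,c)\in D$ such that column $c$ contains no dark cloud yet; if it exists label it a dark cloud and add snowflake cells at $(r',c)$ for all $r'<r$ with $(r',c)\notin D$. $\mathsf{dark}(D)$ is the set of dark-cloud cells, $\mathsf{rajcode}(D)$ is the weak composition whose $i$-th entry is the number of cells of $\mathsf{snow}(D)$ in row $i$; $\mathsf{rajcode}(\alpha)=\mathsf{rajcode}(D(\alpha))$, $\mathsf{dark}(\alpha)=\mathsf{dark}(D(\alpha))$. *)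

theory Defs
  imports Main
begin

text \<open>Cells are pairs (r, c): row r (row 1 on top), column c; both positive.
A weak composition is represented as a function nat => nat whose i-th entry
(i >= 1) is alpha i; the unused index 0 is fixed to 0 and the support is finite.\<close>

definition weak_comp :: "(nat \<Rightarrow> nat) \<Rightarrow> bool" where
  "weak_comp \<alpha> \<longleftrightarrow> \<alpha> 0 = 0 \<and> finite {i. \<alpha> i \<noteq> 0}"

definition diag :: "(nat \<Rightarrow> nat) \<Rightarrow> (nat \<times> nat) set" where
  "diag \<alpha> = {(r, c). 1 \<le> r \<and> 1 \<le> c \<and> c \<le> \<alpha> r}"

text \<open>Dark clouds after processing rows M, M-1, ..., M-k+1 (bottom to top).\<close>
fun dark_rows :: "(nat \<times> nat) set \<Rightarrow> nat \<Rightarrow> nat \<Rightarrow> (nat \<times> nat) set" where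
  "dark_rows D M 0 = {}"
| "dark_rows D M (Suc k) =
     (let S = dark_rows D M k;
          r = M - k;
          cols = {c. (r, c) \<in> D \<and> c \<notin> snd ` S}
      in if cols = {} then S else insert (r, Max cols) S)"

definition dark :: "(nat \<times> nat) set \<Rightarrow> (nat \<times> nat) set" where
  "dark D = (let M = Max (insert 0 (fst ` D)) in dark_rows D M M)"

text \<open>Underlying diagram of snow(D): cells of D plus snowflakes above dark clouds.\<close>
definition snow :: "(nat \<times> nat) set \<Rightarrow> (nat \<times> nat) set" where
  "snow D = D \<union> {(r', c). \<exists>r. (r, c) \<in> dark D \<and> 1 \<le> r' \<and> r' < r \<and> (r', c) \<notin> D}"

definition rajcode :: "(nat \<times> nat) set \<Rightarrow> nat \<Rightarrow> nat" where
  "rajcode D i = (if i = 0 then 0 else card {c. (i, c) \<in> snow D})"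

end

theory Submission
  imports Defs
begin

lemma dark_rows_finite: "finite (dark_rows D M k)"
  by (induction k) (auto simp: Let_def)

lemma dark_rows_rows: "k \<le> M \<Longrightarrow> x \<in> dark_rows D M k \<Longrightarrow> M - k < fst x \<and> fst x \<le> M"
proof (induction k arbitrary: x)
  case 0
  then show ?case by simp
next
  case (Suc k)
  then have k: "k \<le> M" by simp
  show ?case
  proof (cases "x \<in> dark_rows D M k")
    case True
    then show ?thesis using Suc.IH[OF k] by fastforce
  next
    case False
    then have "fst x = M - k" using Suc.prems by (auto simp: Let_def split: if_splits)
    then show ?thesis using Suc.prems by simp
  qed
qed

lemma dark_rows_prefix:
  "k + j \<le> M \<Longrightarrow> {x \<in> dark_rows D M (k + j). M - k < fst x} = dark_rows D M k"
proof (induction j)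
  case 0
  then show ?case using dark_rows_rows[of k M _ D] by auto
next
  case (Suc j)
  have IH: "{x \<in> dark_rows D M (k + j). M - k < fst x} = dark_rows D M k" using Suc by simp
  have "\<not> (M - k < M - (k + j))" by arith
  then show ?case using IH by (auto simp: Let_def)
qed

lemma dark_rows_empty: "(\<forall>x\<in>D. fst x \<le> N) \<Longrightarrow> j \<le> M - N \<Longrightarrow> dark_rows D M j = {}"
proof (induction j)
  case 0
  then show ?case by simp
next
  case (Suc j)
  have "{c. (M - j, c) \<in> D \<and> c \<notin> snd ` dark_rows D M j} = {}"
    using Suc.prems by force
  then show ?case using Suc by (simp add: Let_def)
qed

lemma dark_rows_shift: "(\<forall>x\<in>D. fst x \<le> N) \<Longrightarrow> N \<le> M \<Longrightarrow> dark_rows D M (M - N + k) = dark_rows D N k"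
proof (induction k)
  case 0
  then show ?case by (simp add: dark_rows_empty)
next
  case (Suc k)
  have e: "M - (M - N + k) = N - k" using Suc.prems by arith
  have "dark_rows D M (M - N + Suc k) = dark_rows D M (Suc (M - N + k))" by simp
  then show ?case using Suc by (simp add: Let_def e)
qed

lemma diag_bound:
  assumes "weak_comp \<alpha>" "x \<in> diag \<alpha>"
  shows "fst x \<le> Max (insert 0 (fst ` diag \<alpha>))"
proof -
  have "fst ` diag \<alpha> \<subseteq> {i. \<alpha> i \<noteq> 0}" by (auto simp: diag_def)
  then have "finite (fst ` diag \<alpha>)" using assms(1) unfolding weak_comp_def
    using finite_subset by blast
  then show ?thesis using assms(2) by simp
qed

lemma dark_eq:
  assumes "weak_comp \<alpha>" "Max (insert 0 (fst ` diag \<alpha>)) \<le> M"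
  shows "dark (diag \<alpha>) = dark_rows (diag \<alpha>) M M"
proof -
  define N where "N = Max (insert 0 (fst ` diag \<alpha>))"
  have b: "\<forall>x\<in>diag \<alpha>. fst x \<le> N" using diag_bound[OF assms(1)] N_def by blast
  have "dark_rows (diag \<alpha>) M (M - N + N) = dark_rows (diag \<alpha>) N N"
    using dark_rows_shift[OF b] assms(2) N_def by blast
  moreover have "M - N + N = M" using assms(2) N_def by simp
  ultimately show ?thesis unfolding dark_def N_def Let_def by simp
qed

lemma upper_eq:
  assumes "dark D = dark_rows D M M" "k \<le> M"
  shows "{c. \<exists>s>M-k. (s,c) \<in> dark D} = snd ` dark_rows D M k"
proof -
  have "{x \<in> dark_rows D M (k + (M - k)). M - k < fst x} = dark_rows D M k"
    using dark_rows_prefix[of k "M-k" M D] assms(2) by simp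
  then have e: "{x \<in> dark D. M - k < fst x} = dark_rows D M k" using assms by simp
  have "{c. \<exists>s>M-k. (s,c) \<in> dark D} = snd ` {x \<in> dark D. M - k < fst x}" by force
  then show ?thesis using e by simp
qed

lemma snow_row: "1 \<le> r \<Longrightarrow> {c. (r,c) \<in> snow (diag \<alpha>)} = {1..\<alpha> r} \<union> {c. \<exists>s>r. (s,c) \<in> dark (diag \<alpha>)}"
  by (auto simp: snow_def diag_def)

lemma snow_row0: "{c. (0,c) \<in> snow (diag \<alpha>)} = {}"
  by (auto simp: snow_def diag_def)

lemma card_nested:
  fixes U :: "nat set"
  assumes "finite U" "card ({1..a} \<union> U) = card ({1..b} \<union> U)"
  shows "{1..a} - U = {1..b} - U"
proof -
  have c: "card ({1..n} \<union> U) = card ({1..n} - U) + card U" for n :: nat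
  proof -
    have "{1..n} \<union> U = ({1..n} - U) \<union> U" by blast
    moreover have "card (({1..n} - U) \<union> U) = card ({1..n} - U) + card U"
      by (rule card_Un_disjoint) (use assms(1) in auto)
    ultimately show ?thesis by simp
  qed
  have cc: "card ({1..a} - U) = card ({1..b} - U)" using assms(2) c[of a] c[of b] by simp
  show ?thesis
  proof (cases "a \<le> b")
    case True
    then have "{1..a} - U \<subseteq> {1..b} - U" by auto
    then show ?thesis using card_subset_eq[of "{1..b} - U"] cc by simp
  next
    case False
    then have "{1..b} - U \<subseteq> {1..a} - U" by auto
    then show ?thesis using card_subset_eq[of "{1..a} - U" "{1..b} - U"] cc by simp
  qed
qed

lemma max_nested_aux:
  fixes U :: "nat set"
  assumes "a \<le> b"
    "({1..a} - U = {} \<and> {1..b} - U = {}) \<or>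
     ({1..a} - U \<noteq> {} \<and> {1..b} - U \<noteq> {} \<and> Max ({1..a} - U) = Max ({1..b} - U))"
  shows "{1..a} \<union> U = {1..b} \<union> U"
proof -
  have "c \<in> {1..a}" if "c \<in> {1..b}" "c \<notin> U" for c
  proof -
    have ne: "{1..b} - U \<noteq> {}" using that by blast
    have "c \<le> Max ({1..b} - U)" using that by simp
    moreover have "Max ({1..a} - U) \<in> {1..a} - U" using ne assms(2) by (intro Max_in) auto
    ultimately show ?thesis using ne assms(2) that by auto
  qed
  then show ?thesis using assms(1) by auto
qed

lemma max_nested:
  fixes U :: "nat set"
  assumes
    "({1..a} - U = {} \<and> {1..b} - U = {}) \<or>
     ({1..a} - U \<noteq> {} \<and> {1..b} - U \<noteq> {} \<and> Max ({1..a} - U) = Max ({1..b} - U))"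
  shows "{1..a} \<union> U = {1..b} \<union> U"
proof (cases "a \<le> b")
  case True
  then show ?thesis using max_nested_aux assms by blast
next
  case False
  then have "b \<le> a" by simp
  then show ?thesis using max_nested_aux[of b a U] assms by metis
qed

lemma cols_eq:
  assumes "1 \<le> M - k"
  shows "{c. (M - k, c) \<in> diag \<alpha> \<and> c \<notin> snd ` dark_rows (diag \<alpha>) M k}
    = {1..\<alpha> (M - k)} - snd ` dark_rows (diag \<alpha>) M k"
  using assms by (auto simp: diag_def)

lemma step_eq:
  assumes "k < M"
  shows "dark_rows (diag \<alpha>) M (Suc k) =
    (if {1..\<alpha> (M - k)} - snd ` dark_rows (diag \<alpha>) M k = {} then dark_rows (diag \<alpha>) M k
     else insert (M - k, Max ({1..\<alpha> (M - k)} - snd ` dark_rows (diag \<alpha>) M k)) (dark_rows (diag \<alpha>) M k))"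
proof -
  have r1: "1 \<le> M - k" using assms by simp
  show ?thesis by (simp only: dark_rows.simps Let_def cols_eq[OF r1])
qed

theorem proposition4p16:
  fixes \<alpha> \<gamma> :: "nat \<Rightarrow> nat"
  assumes "weak_comp \<alpha>" and "weak_comp \<gamma>"
  shows "(rajcode (diag \<alpha>) = rajcode (diag \<gamma>) \<longleftrightarrow> dark (diag \<alpha>) = dark (diag \<gamma>))
       \<and> (dark (diag \<alpha>) = dark (diag \<gamma>) \<longleftrightarrow> snow (diag \<alpha>) = snow (diag \<gamma>))"
proof -
  define M where "M = max (Max (insert 0 (fst ` diag \<alpha>))) (Max (insert 0 (fst ` diag \<gamma>)))"
  have da: "dark (diag \<alpha>) = dark_rows (diag \<alpha>) M M"
    using dark_eq[OF assms(1)] M_def by simp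
  have dg: "dark (diag \<gamma>) = dark_rows (diag \<gamma>) M M"
    using dark_eq[OF assms(2)] M_def by simp
  have ba: "\<alpha> r = 0" if "M < r" for r
  proof (rule ccontr)
    assume "\<alpha> r \<noteq> 0"
    then have "(r, 1) \<in> diag \<alpha>" using that by (auto simp: diag_def)
    then show False using diag_bound[OF assms(1), of "(r,1)"] that M_def by simp
  qed
  have bg: "\<gamma> r = 0" if "M < r" for r
  proof (rule ccontr)
    assume "\<gamma> r \<noteq> 0"
    then have "(r, 1) \<in> diag \<gamma>" using that by (auto simp: diag_def)
    then show False using diag_bound[OF assms(2), of "(r,1)"] that M_def by simp
  qed
  have RD: "dark (diag \<alpha>) = dark (diag \<gamma>)" if R: "rajcode (diag \<alpha>) = rajcode (diag \<gamma>)"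
  proof -
    have "k \<le> M \<longrightarrow> dark_rows (diag \<alpha>) M k = dark_rows (diag \<gamma>) M k" for k
    proof (induction k)
      case 0
      then show ?case by simp
    next
      case (Suc k)
      show ?case
      proof
        assume k: "Suc k \<le> M"
        have r1: "1 \<le> M - k" using k by simp
        have nk: "\<not> M \<le> k" using k by simp
        have IH: "dark_rows (diag \<alpha>) M k = dark_rows (diag \<gamma>) M k" using Suc k by simp
        define U where "U = snd ` dark_rows (diag \<alpha>) M k"
        have fU: "finite U" unfolding U_def using dark_rows_finite by simp
        have Ua: "{c. \<exists>s>M-k. (s,c) \<in> dark (diag \<alpha>)} = U"
          using upper_eq[OF da] k U_def by simp
        have Ug: "{c. \<exists>s>M-k. (s,c) \<in> dark (diag \<gamma>)} = U"
          using upper_eq[OF dg] k U_def IH by simp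
        have "rajcode (diag \<alpha>) (M - k) = rajcode (diag \<gamma>) (M - k)" using R by simp
        then have "card ({1..\<alpha> (M - k)} \<union> U) = card ({1..\<gamma> (M - k)} \<union> U)"
          using k snow_row[OF r1, of \<alpha>] snow_row[OF r1, of \<gamma>] Ua Ug
          by (simp add: rajcode_def nk)
        then have "{1..\<alpha> (M - k)} - U = {1..\<gamma> (M - k)} - U"
          using card_nested fU by blast
        then show "dark_rows (diag \<alpha>) M (Suc k) = dark_rows (diag \<gamma>) M (Suc k)"
          using step_eq[of k M \<alpha>] step_eq[of k M \<gamma>] k IH U_def by simp
      qed
    qed
    then show ?thesis using da dg by simp
  qed
  have DS: "snow (diag \<alpha>) = snow (diag \<gamma>)" if D: "dark (diag \<alpha>) = dark (diag \<gamma>)"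
  proof -
    have rows: "{c. (r,c) \<in> snow (diag \<alpha>)} = {c. (r,c) \<in> snow (diag \<gamma>)}" for r
    proof (cases "r = 0")
      case True
      then show ?thesis using snow_row0 by simp
    next
      case False
      then have r1: "1 \<le> r" by simp
      define V where "V = {c. \<exists>s>r. (s,c) \<in> dark (diag \<alpha>)}"
      have V2: "V = {c. \<exists>s>r. (s,c) \<in> dark (diag \<gamma>)}" using D V_def by simp
      have "{1..\<alpha> r} \<union> V = {1..\<gamma> r} \<union> V"
      proof (cases "M < r")
        case True
        then show ?thesis using ba bg by simp
      next
        case False
        define k where "k = M - r"
        have rk: "r = M - k" and kM: "k < M" using False r1 k_def by auto
        have pa: "{x \<in> dark (diag \<alpha>). M - j < fst x} = dark_rows (diag \<alpha>) M j" if "j \<le> M" for j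
          using dark_rows_prefix[of j "M-j" M "diag \<alpha>"] that da by simp
        have pg: "{x \<in> dark (diag \<gamma>). M - j < fst x} = dark_rows (diag \<gamma>) M j" if "j \<le> M" for j
          using dark_rows_prefix[of j "M-j" M "diag \<gamma>"] that dg by simp
        have E0: "dark_rows (diag \<alpha>) M k = dark_rows (diag \<gamma>) M k"
          using pa[of k] pg[of k] kM D by simp
        have E1: "dark_rows (diag \<alpha>) M (Suc k) = dark_rows (diag \<gamma>) M (Suc k)"
          using pa[of "Suc k"] pg[of "Suc k"] kM D by simp
        define S where "S = dark_rows (diag \<alpha>) M k"
        define U where "U = snd ` S"
        have fU: "finite U" unfolding U_def S_def using dark_rows_finite by simp
        have VU: "V = U" using upper_eq[OF da, of k] kM rk V_def U_def S_def by simp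
        have nr: "(r, c) \<notin> S" for c
          using dark_rows_rows[of k M "(r,c)" "diag \<alpha>"] kM rk S_def by auto
        define A where "A = {1..\<alpha> r} - U"
        define B where "B = {1..\<gamma> r} - U"
        have sa: "dark_rows (diag \<alpha>) M (Suc k) = (if A = {} then S else insert (r, Max A) S)"
          using step_eq[of k M \<alpha>] kM rk A_def U_def S_def by simp
        have sg: "dark_rows (diag \<gamma>) M (Suc k) = (if B = {} then S else insert (r, Max B) S)"
          using step_eq[of k M \<gamma>] kM rk B_def U_def S_def E0 by simp
        have "(A = {} \<and> B = {}) \<or> (A \<noteq> {} \<and> B \<noteq> {} \<and> Max A = Max B)"
        proof -
          have eq: "(if A = {} then S else insert (r, Max A) S) = (if B = {} then S else insert (r, Max B) S)"
            using sa sg E1 by simp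
          show ?thesis
          proof (cases "A = {}"; cases "B = {}")
            assume "A = {}" "B \<noteq> {}"
            then show ?thesis using eq nr by (metis insertI1)
          next
            assume "A \<noteq> {}" "B = {}"
            then show ?thesis using eq nr by (metis insertI1)
          next
            assume "A \<noteq> {}" "B \<noteq> {}"
            then have "insert (r, Max A) S = insert (r, Max B) S" using eq by simp
            then have "(r, Max A) \<in> insert (r, Max B) S" by blast
            then show ?thesis using nr \<open>A \<noteq> {}\<close> \<open>B \<noteq> {}\<close> by auto
          qed simp
        qed
        then have "{1..\<alpha> r} \<union> U = {1..\<gamma> r} \<union> U"
          using max_nested A_def B_def by blast
        then show ?thesis using VU by simp
      qed
      then show ?thesis using snow_row[OF r1, of \<alpha>] snow_row[OF r1, of \<gamma>] V_def V2 by simp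
    qed
    show ?thesis
    proof (rule set_eqI)
      fix x :: "nat \<times> nat"
      obtain r c where x: "x = (r, c)" by (cases x)
      have "c \<in> {c. (r,c) \<in> snow (diag \<alpha>)} \<longleftrightarrow> c \<in> {c. (r,c) \<in> snow (diag \<gamma>)}"
        using rows[of r] by simp
      then show "x \<in> snow (diag \<alpha>) \<longleftrightarrow> x \<in> snow (diag \<gamma>)" using x by simp
    qed
  qed
  have SR: "rajcode (diag \<alpha>) = rajcode (diag \<gamma>)" if S: "snow (diag \<alpha>) = snow (diag \<gamma>)"
    unfolding rajcode_def S by (rule refl)
  show ?thesis using RD DS SR by blast
qed

end
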